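(* Let $A$ be an associative algebra and $\{ r_\alpha \}_{\alpha \in \Omega}\subset A\otimes A$ a skew-symmetric associative Yang-Baxter family of type-II, with $r_\alpha=\sum r^{(1)}_\alpha\otimes r^{(2)}_\alpha$. Then the collection $\{ T_\alpha : A^{*} \to A \}_{\alpha \in \Omega}$, $T_\alpha(f) = \sum f (r^{(2)}_\alpha ) r^{(1)}_\alpha$, is an $\mathcal{O}$-operator family on the coadjoint bimodule $A^*$ over $A$, i.e. $T_\alpha(f)\cdot T_\beta(g) = T_{\alpha\beta}\big(T_\alpha(f)\cdot g + f\cdot T_\beta(g)\big)$ for all $f,g\in A^*$, $\alpha,\beta\in\Omega$.
   Context: $\Omega$ is a semigroup. For $r_\alpha=\sum r^{(1)}_\alpha\otimes r^{(2)}_\alpha\in A^{\otimes 2}$ set $r^{12}_\alpha = \sum r^{(1)}_\alpha \otimes r^{(2)}_\alpha \otimes 1$, $r^{13}_\alpha = \sum r^{(1)}_\alpha \otimes 1 \otimes r^{(2)}_\alpha$, $r^{23}_\alpha = \sum 1 \otimes r^{(1)}_\alpha \otimes r^{(2)}_\alpha$ in $A^{\otimes 3}$ (or $(A^+)^{\otimes 3}$, $A^+ = A\oplus\mathbf{k}$ the unitization, if $A$ is non-unital), with componentwise product. $\{r_\alpha\}$ is an associative Yang-Baxter family of type-II if $r^{13}_\alpha r^{12}_\beta - r^{12}_{\alpha \beta} r^{23}_\alpha + r^{23}_\beta r^{13}_{\alpha \beta}=0$ for all $\alpha,\beta\in\Omega$; it is skew-symmetric if $\sum r^{(1)}_\alpha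 \otimes r^{(2)}_\alpha = -\sum r^{(2)}_\alpha \otimes r^{(1)}_\alpha$ for each $\alpha$. The coadjoint $A$-bimodule $A^*$ has actions $(a \cdot f)(b)=f(b \cdot a)$ and $(f \cdot a)(b)=f(a \cdot b)$. *)

theory Defs
  imports Complex_Main
begin

definition assoc_algebra :: "('k::field \<Rightarrow> 'a::ring \<Rightarrow> 'a) \<Rightarrow> bool" where
  "assoc_algebra sc \<longleftrightarrow> Vector_Spaces.vector_space sc \<and>
     (\<forall>c x y. sc c (x * y) = sc c x * y \<and> sc c (x * y) = x * sc c y)"

definition lin_fun :: "('k::field \<Rightarrow> 'a::ring \<Rightarrow> 'a) \<Rightarrow> ('a \<Rightarrow> 'k) \<Rightarrow> bool" where
  "lin_fun sc f \<longleftrightarrow> Vector_Spaces.linear sc (*) f"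

(* Tensors in A\<otimes>A are given as finite sums \<Sum> x_i \<otimes> y_i (lists of pairs);
   tensors in A\<otimes>A\<otimes>A as lists of triples.  Equality in the tensor product over a field
   is detected by evaluation against all products of linear functionals. *)
definition eval2 :: "('a \<Rightarrow> 'k::field) \<Rightarrow> ('a \<Rightarrow> 'k) \<Rightarrow> ('a \<times> 'a) list \<Rightarrow> 'k" where
  "eval2 \<phi> \<psi> t = (\<Sum>(x, y) \<leftarrow> t. \<phi> x * \<psi> y)"

definition eval3 :: "('a \<Rightarrow> 'k::field) \<Rightarrow> ('a \<Rightarrow> 'k) \<Rightarrow> ('a \<Rightarrow> 'k) \<Rightarrow> ('a \<times> 'a \<times> 'a) list \<Rightarrow> 'k" where
  "eval3 \<phi>1 \<phi>2 \<phi>3 t = (\<Sum>(x, y, z) \<leftarrow> t. \<phi>1 x * \<phi>2 y * \<phi>3 z)"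

definition tensor2_eq :: "('k::field \<Rightarrow> 'a::ring \<Rightarrow> 'a) \<Rightarrow> ('a \<times> 'a) list \<Rightarrow> ('a \<times> 'a) list \<Rightarrow> bool" where
  "tensor2_eq sc s t \<longleftrightarrow>
     (\<forall>\<phi> \<psi>. lin_fun sc \<phi> \<longrightarrow> lin_fun sc \<psi> \<longrightarrow> eval2 \<phi> \<psi> s = eval2 \<phi> \<psi> t)"

definition tensor3_eq :: "('k::field \<Rightarrow> 'a::ring \<Rightarrow> 'a) \<Rightarrow> ('a \<times> 'a \<times> 'a) list \<Rightarrow> ('a \<times> 'a \<times> 'a) list \<Rightarrow> bool" where
  "tensor3_eq sc s t \<longleftrightarrow>
     (\<forall>\<phi>1 \<phi>2 \<phi>3. lin_fun sc \<phi>1 \<longrightarrow> lin_fun sc \<phi>2 \<longrightarrow> lin_fun sc \<phi>3 \<longrightarrow>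
        eval3 \<phi>1 \<phi>2 \<phi>3 s = eval3 \<phi>1 \<phi>2 \<phi>3 t)"

definition tensor3_neg :: "('a::ring \<times> 'a \<times> 'a) list \<Rightarrow> ('a \<times> 'a \<times> 'a) list" where
  "tensor3_neg t = map (\<lambda>(x, y, z). (- x, y, z)) t"

(* componentwise products, with the unit 1 of A^+ absorbed:
   r^13 s^12 = \<Sum> a a' \<otimes> b' \<otimes> b          (r = \<Sum> a\<otimes>b, s = \<Sum> a'\<otimes>b')
   r^12 s^23 = \<Sum> a \<otimes> b a' \<otimes> b'
   r^23 s^13 = \<Sum> a' \<otimes> a \<otimes> b b'        *)
definition prod_13_12 :: "('a::ring \<times> 'a) list \<Rightarrow> ('a \<times> 'a) list \<Rightarrow> ('a \<times> 'a \<times> 'a) list" where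
  "prod_13_12 r s = concat (map (\<lambda>(a, b). map (\<lambda>(a', b'). (a * a', b', b)) s) r)"

definition prod_12_23 :: "('a::ring \<times> 'a) list \<Rightarrow> ('a \<times> 'a) list \<Rightarrow> ('a \<times> 'a \<times> 'a) list" where
  "prod_12_23 r s = concat (map (\<lambda>(a, b). map (\<lambda>(a', b'). (a, b * a', b')) s) r)"

definition prod_23_13 :: "('a::ring \<times> 'a) list \<Rightarrow> ('a \<times> 'a) list \<Rightarrow> ('a \<times> 'a \<times> 'a) list" where
  "prod_23_13 r s = concat (map (\<lambda>(a, b). map (\<lambda>(a', b'). (a', a, b * b')) s) r)"

definition AYB_family_II :: "('k::field \<Rightarrow> 'a::ring \<Rightarrow> 'a) \<Rightarrow> ('w::semigroup_mult \<Rightarrow> ('a \<times> 'a) list) \<Rightarrow> bool" where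
  "AYB_family_II sc r \<longleftrightarrow> (\<forall>\<alpha> \<beta>.
     tensor3_eq sc
       (prod_13_12 (r \<alpha>) (r \<beta>) @ tensor3_neg (prod_12_23 (r (\<alpha> * \<beta>)) (r \<alpha>))
          @ prod_23_13 (r \<beta>) (r (\<alpha> * \<beta>)))
       [])"

definition skew_family :: "('k::field \<Rightarrow> 'a::ring \<Rightarrow> 'a) \<Rightarrow> ('w \<Rightarrow> ('a \<times> 'a) list) \<Rightarrow> bool" where
  "skew_family sc r \<longleftrightarrow> (\<forall>\<alpha>. tensor2_eq sc (r \<alpha>) (map (\<lambda>(x, y). (- y, x)) (r \<alpha>)))"

definition T_op :: "('k::field \<Rightarrow> 'a::ring \<Rightarrow> 'a) \<Rightarrow> ('a \<times> 'a) list \<Rightarrow> ('a \<Rightarrow> 'k) \<Rightarrow> 'a" where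
  "T_op sc r f = (\<Sum>(x, y) \<leftarrow> r. sc (f y) x)"

definition coadj_left :: "'a::ring \<Rightarrow> ('a \<Rightarrow> 'k) \<Rightarrow> ('a \<Rightarrow> 'k)" where
  "coadj_left a f = (\<lambda>b. f (b * a))"

definition coadj_right :: "('a::ring \<Rightarrow> 'k) \<Rightarrow> 'a \<Rightarrow> ('a \<Rightarrow> 'k)" where
  "coadj_right f a = (\<lambda>b. f (a * b))"

definition O_operator_family_coadj ::
  "('k::field \<Rightarrow> 'a::ring \<Rightarrow> 'a) \<Rightarrow> ('w::semigroup_mult \<Rightarrow> ('a \<Rightarrow> 'k) \<Rightarrow> 'a) \<Rightarrow> bool" where
  "O_operator_family_coadj sc T \<longleftrightarrow> (\<forall>\<alpha> \<beta> f g. lin_fun sc f \<longrightarrow> lin_fun sc g \<longrightarrow>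
     T \<alpha> f * T \<beta> g = T (\<alpha> * \<beta>) (\<lambda>b. coadj_left (T \<alpha> f) g b + coadj_right f (T \<beta> g) b))"

end

theory Submission
  imports Defs
begin

lemma sl_concat: "sum_list (concat xss) = sum_list (map sum_list xss)"
  by (induct xss) auto

lemma sl_swap: "(\<Sum>x\<leftarrow>xs. \<Sum>y\<leftarrow>ys. F x y) = (\<Sum>y\<leftarrow>ys. \<Sum>x\<leftarrow>xs. (F x y :: 'b::comm_monoid_add))"
  by (induct xs) (auto simp: sum_list_addf)

lemma sum_list_minus: "(\<Sum>x\<leftarrow>xs. - F x) = - (\<Sum>x\<leftarrow>xs. (F x :: 'b::ab_group_add))"
  by (induct xs) auto

lemma field_vs: "Vector_Spaces.vector_space ((*) :: 'k::field \<Rightarrow> 'k \<Rightarrow> 'k)"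
  unfolding vector_space_def module_def by (auto simp: algebra_simps)

lemma sep:
  fixes sc :: "'k::field \<Rightarrow> 'a::ab_group_add \<Rightarrow> 'a"
  assumes vs: "Vector_Spaces.vector_space sc" and x: "x \<noteq> 0"
  shows "\<exists>\<phi>. Vector_Spaces.linear sc (*) \<phi> \<and> \<phi> x \<noteq> 0"
proof -
  interpret vector_space_pair sc "(*) :: 'k \<Rightarrow> 'k \<Rightarrow> 'k"
    unfolding vector_space_pair_def using vs field_vs by auto
  have "vs1.independent {x}" using x by simp
  from linear_independent_extend[OF this, of "\<lambda>_. 1"] show ?thesis by auto
qed

lemma lin_props:
  assumes "lin_fun sc \<phi>"
  shows "\<phi> (x + y) = \<phi> x + \<phi> y" "\<phi> (sc c x) = c * \<phi> x" "\<phi> 0 = 0" "\<phi> (- x) = - \<phi> x"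
    "\<phi> (x - y) = \<phi> x - \<phi> y"
proof -
  have a: "\<And>x y. \<phi> (x + y) = \<phi> x + \<phi> y" and s: "\<And>c x. \<phi> (sc c x) = c * \<phi> x"
    using assms unfolding lin_fun_def Vector_Spaces.linear_iff by auto
  show "\<phi> (x + y) = \<phi> x + \<phi> y" "\<phi> (sc c x) = c * \<phi> x" by (fact a, fact s)
  have z: "\<phi> 0 = 0" using a[of 0 0] by (metis add_cancel_right_right)
  show "\<phi> 0 = 0" by fact
  have n: "\<And>x. \<phi> (- x) = - \<phi> x" using a z by (metis add.right_inverse add_eq_0_iff)
  show "\<phi> (- x) = - \<phi> x" by fact
  show "\<phi> (x - y) = \<phi> x - \<phi> y" using a n by (metis diff_conv_add_uminus)
qed

lemma lin_sum:
  assumes "lin_fun sc \<phi>"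
  shows "\<phi> (\<Sum>x\<leftarrow>xs. h x) = (\<Sum>x\<leftarrow>xs. \<phi> (h x))"
  by (induct xs) (auto simp: lin_props[OF assms])

lemma lin_right_mult:
  assumes "assoc_algebra sc" "lin_fun sc f"
  shows "lin_fun sc (\<lambda>x. f (x * b))"
  using assms unfolding lin_fun_def Vector_Spaces.linear_iff assoc_algebra_def
  by (auto simp: distrib_right) metis

lemma lin_left_mult:
  assumes "assoc_algebra sc" "lin_fun sc f"
  shows "lin_fun sc (\<lambda>x. f (b * x))"
  using assms unfolding lin_fun_def Vector_Spaces.linear_iff assoc_algebra_def
  by (auto simp: distrib_left) metis

theorem proposition2p21:
  fixes sc :: "'k::field \<Rightarrow> 'a::ring \<Rightarrow> 'a"
    and r :: "'w::semigroup_mult \<Rightarrow> ('a \<times> 'a) list"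
  assumes "assoc_algebra sc"
    and "AYB_family_II sc r"
    and "skew_family sc r"
  shows "O_operator_family_coadj sc (\<lambda>\<alpha> f. T_op sc (r \<alpha>) f)"
  unfolding O_operator_family_coadj_def
proof (intro allI impI)
  fix \<alpha> \<beta> :: 'w and f g :: "'a \<Rightarrow> 'k"
  assume f: "lin_fun sc f" and g: "lin_fun sc g"
  define ra where "ra = r \<alpha>"
  define rb where "rb = r \<beta>"
  define rab where "rab = r (\<alpha> * \<beta>)"
  define Ta where "Ta = T_op sc ra f"
  define Tb where "Tb = T_op sc rb g"
  define h where "h = (\<lambda>b. coadj_left Ta g b + coadj_right f Tb b)"
  have vs: "Vector_Spaces.vector_space sc" using assms(1) unfolding assoc_algebra_def by auto
  have ml: "\<And>c x y. sc c x * y = sc c (x * y)" and mr: "\<And>c x y. x * sc c y = sc c (x * y)"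
    using assms(1) unfolding assoc_algebra_def by metis+
  have eq: "\<phi> (Ta * Tb) = \<phi> (T_op sc rab h)" if \<phi>: "lin_fun sc \<phi>" for \<phi>
  proof -
    define S1 where "S1 = (\<Sum>(a,b)\<leftarrow>ra. \<Sum>(a',b')\<leftarrow>rb. \<phi> (a*a') * g b' * f b)"
    define S2 where "S2 = (\<Sum>(a,b)\<leftarrow>rab. \<Sum>(a',b')\<leftarrow>ra. \<phi> a * g (b*a') * f b')"
    define S3 where "S3 = (\<Sum>(a,b)\<leftarrow>rb. \<Sum>(a',b')\<leftarrow>rab. \<phi> a' * g a * f (b*b'))"
    define S4 where "S4 = (\<Sum>(a,b)\<leftarrow>rab. \<Sum>(a',b')\<leftarrow>rb. g b' * f (a'*b) * \<phi> a)"
    have ayb: "S1 - S2 + S3 = 0"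
    proof -
      have "eval3 \<phi> g f (prod_13_12 ra rb @ tensor3_neg (prod_12_23 rab ra) @ prod_23_13 rb rab)
          = eval3 \<phi> g f []"
        using assms(2) \<phi> f g unfolding AYB_family_II_def tensor3_eq_def ra_def rb_def rab_def by blast
      then show ?thesis
        unfolding eval3_def prod_13_12_def prod_12_23_def prod_23_13_def tensor3_neg_def
          S1_def S2_def S3_def
        by (simp add: sl_concat map_concat o_def case_prod_unfold lin_props[OF \<phi>] sum_list_minus algebra_simps)
    qed
    have l: "\<phi> (Ta * Tb) = S1"
      unfolding Ta_def Tb_def T_op_def S1_def
      by (simp add: sum_list_mult_const[symmetric] sum_list_const_mult[symmetric] lin_sum[OF \<phi>]
          case_prod_unfold ml mr lin_props[OF \<phi>] mult_ac) (subst sl_swap, simp)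
    have r: "\<phi> (T_op sc rab h) = S2 + S4"
      unfolding T_op_def h_def coadj_left_def coadj_right_def Ta_def Tb_def S2_def S4_def
      by (simp add: sum_list_mult_const[symmetric] sum_list_const_mult[symmetric] lin_sum[OF \<phi>]
          lin_sum[OF f] lin_sum[OF g] case_prod_unfold ml mr lin_props[OF \<phi>] lin_props[OF f]
          lin_props[OF g] mult_ac sum_list_addf[symmetric] distrib_right)
        (intro arg_cong[where f=sum_list] map_cong refl; simp add: distrib_left sum_list_const_mult[symmetric])
    have s34: "S3 = - S4"
    proof -
      have sk: "(\<Sum>(a,b)\<leftarrow>rb. g a * f (b*c)) = - (\<Sum>(a,b)\<leftarrow>rb. g b * f (a*c))" for c
      proof -
        have "eval2 g (\<lambda>x. f (x * c)) rb = eval2 g (\<lambda>x. f (x * c)) (map (\<lambda>(x, y). (- y, x)) rb)"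
          using assms(3) g lin_right_mult[OF assms(1) f] unfolding skew_family_def tensor2_eq_def rb_def
          by blast
        then have "(\<Sum>(a,b)\<leftarrow>rb. g a * f (b*c)) = (\<Sum>(a,b)\<leftarrow>rb. g (- b) * f (a*c))"
          unfolding eval2_def by (simp add: o_def case_prod_unfold)
        also have "\<dots> = (\<Sum>(a,b)\<leftarrow>rb. - (g b * f (a*c)))"
          by (simp add: case_prod_unfold lin_props[OF g])
        also have "\<dots> = - (\<Sum>(a,b)\<leftarrow>rb. g b * f (a*c))"
          by (simp add: case_prod_unfold sum_list_minus)
        finally show ?thesis .
      qed
      have "S3 = (\<Sum>(a',b')\<leftarrow>rab. \<phi> a' * (\<Sum>(a,b)\<leftarrow>rb. g a * f (b*b')))"
        unfolding S3_def case_prod_unfold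
        by (subst sl_swap) (simp add: sum_list_const_mult[symmetric] mult_ac)
      also have "\<dots> = (\<Sum>p\<leftarrow>rab. \<phi> (fst p) * - (\<Sum>q\<leftarrow>rb. g (snd q) * f (fst q * snd p)))"
        by (simp only: sk[unfolded case_prod_unfold] case_prod_unfold)
      also have "\<dots> = (\<Sum>p\<leftarrow>rab. - (\<Sum>q\<leftarrow>rb. g (snd q) * f (fst q * snd p) * \<phi> (fst p)))"
        by (simp add: sum_list_const_mult algebra_simps)
      also have "\<dots> = - S4"
        by (simp add: S4_def case_prod_unfold sum_list_minus)
      finally show ?thesis .
    qed
    show ?thesis using ayb l r s34 by (simp add: algebra_simps)
  qed
  have "Ta * Tb - T_op sc rab h = 0"
  proof (rule ccontr)
    assume "Ta * Tb - T_op sc rab h \<noteq> 0"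
    from sep[OF vs this] obtain \<phi> where p: "lin_fun sc \<phi>" and n: "\<phi> (Ta * Tb - T_op sc rab h) \<noteq> 0"
      unfolding lin_fun_def by auto
    then show False using eq[OF p] lin_props(5)[OF p, of "Ta * Tb" "T_op sc rab h"] by simp
  qed
  then show "T_op sc (r \<alpha>) f * T_op sc (r \<beta>) g =
         T_op sc (r (\<alpha> * \<beta>)) (\<lambda>b. coadj_left (T_op sc (r \<alpha>) f) g b + coadj_right f (T_op sc (r \<beta>) g) b)"
    unfolding Ta_def Tb_def h_def ra_def rb_def rab_def by simp
qed

end
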